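(* Let $P$ be a poset and $\Delta^\varphi$ a nondegenerate simplex of $N(P)$. The space of filtered maps $\mathcal C^0_P(\|\Delta^\varphi\|_P,\|\Delta^\varphi\|_P)$ is contractible.
   Context: $\varphi_P:\|N(P)\|\to P$ sends a point $(\{q_0<\dots<q_m\},t)$, $t$ in the interior of $\Delta^m$, to $q_m$. For $\varphi:\Delta^n\hookrightarrow N(P)$, $\|\Delta^\varphi\|_P=(\|\Delta^n\|,\varphi_P\circ\|\varphi\|)$, a space over $P$ ($P$ with the Alexandrov topology). $\mathcal C^0_P(A,B)$ is the set of continuous maps $A\to B$ commuting with the maps to $P$, with the subspace topology of $\mathcal C^0(A,B)$ (in $\Delta$-generated spaces). *)

theory Defs
  imports "HOL-Analysis.Analysis"
begin

text \<open>Geometric standard n-simplex as a subset of nat \<Rightarrow> real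
  (same definition as in HOL-Homology.Simplices).\<close>
definition standard_simplex :: "nat \<Rightarrow> (nat \<Rightarrow> real) set" where
  "standard_simplex p \<equiv>
    {x. (\<forall>i. 0 \<le> x i \<and> x i \<le> 1) \<and> (\<forall>i>p. x i = 0) \<and> (\<Sum>i\<le>p. x i) = 1}"

abbreviation simplex_top :: "nat \<Rightarrow> (nat \<Rightarrow> real) topology" where
  "simplex_top k \<equiv> subtopology (powertop_real UNIV) (standard_simplex k)"

text \<open>Delta-ification: the final topology w.r.t. all continuous maps from standard simplices.\<close>
definition dgen_open :: "'a topology \<Rightarrow> 'a set \<Rightarrow> bool" where
  "dgen_open X U \<longleftrightarrow> U \<subseteq> topspace X \<and>
     (\<forall>k \<sigma>. continuous_map (simplex_top k) X \<sigma> \<longrightarrow>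
        openin (simplex_top k) {x \<in> standard_simplex k. \<sigma> x \<in> U})"

lemma istopology_dgen_open: "istopology (dgen_open X)"
  unfolding istopology_def
proof (intro conjI allI impI)
  fix S T assume S: "dgen_open X S" and T: "dgen_open X T"
  show "dgen_open X (S \<inter> T)"
    unfolding dgen_open_def
  proof (intro conjI allI impI)
    show "S \<inter> T \<subseteq> topspace X" using S unfolding dgen_open_def by blast
    fix k \<sigma> assume c: "continuous_map (simplex_top k) X \<sigma>"
    have eq: "{x \<in> standard_simplex k. \<sigma> x \<in> S \<inter> T} =
          {x \<in> standard_simplex k. \<sigma> x \<in> S} \<inter> {x \<in> standard_simplex k. \<sigma> x \<in> T}" by blast
    have oS: "openin (simplex_top k) {x \<in> standard_simplex k. \<sigma> x \<in> S}"
      using S c unfolding dgen_open_def by blast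
    have oT: "openin (simplex_top k) {x \<in> standard_simplex k. \<sigma> x \<in> T}"
      using T c unfolding dgen_open_def by blast
    show "openin (simplex_top k) {x \<in> standard_simplex k. \<sigma> x \<in> S \<inter> T}"
      unfolding eq using oS oT by (rule openin_Int)
  qed
next
  fix K assume K: "\<forall>S\<in>K. dgen_open X S"
  show "dgen_open X (\<Union>K)"
    unfolding dgen_open_def
  proof (intro conjI allI impI)
    show "\<Union>K \<subseteq> topspace X" using K unfolding dgen_open_def by blast
    fix k \<sigma> assume c: "continuous_map (simplex_top k) X \<sigma>"
    have eq: "{x \<in> standard_simplex k. \<sigma> x \<in> \<Union>K} =
          \<Union>((\<lambda>S. {x \<in> standard_simplex k. \<sigma> x \<in> S}) ` K)" by blast
    have o: "\<And>S. S \<in> K \<Longrightarrow> openin (simplex_top k) {x \<in> standard_simplex k. \<sigma> x \<in> S}"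
      using K c unfolding dgen_open_def by blast
    show "openin (simplex_top k) {x \<in> standard_simplex k. \<sigma> x \<in> \<Union>K}"
      unfolding eq by (rule openin_Union) (use o in blast)
  qed
qed

definition dgen :: "'a topology \<Rightarrow> 'a topology" where
  "dgen X = topology (dgen_open X)"

text \<open>Compact-open topology on the set of continuous maps A \<rightarrow> B
  (maps are taken extensional: undefined outside topspace A).\<close>
definition compact_open :: "'a topology \<Rightarrow> 'b topology \<Rightarrow> ('a \<Rightarrow> 'b) topology" where
  "compact_open A B = topology_generated_by
     {F. \<exists>K U. compactin A K \<and> openin B U \<and>
        F = {f. continuous_map A B f \<and> f \<in> extensional (topspace A) \<and> f ` K \<subseteq> U}}"

definition mapping_space :: "'a topology \<Rightarrow> 'b topology \<Rightarrow> ('a \<Rightarrow> 'b) topology" where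
  "mapping_space A B = dgen (compact_open A B)"

definition dsubtopology :: "'a topology \<Rightarrow> 'a set \<Rightarrow> 'a topology" where
  "dsubtopology X S = dgen (subtopology X S)"

definition dcontractible :: "'a topology \<Rightarrow> bool" where
  "dcontractible X \<longleftrightarrow> (\<exists>a \<in> topspace X. \<exists>H.
     continuous_map (dgen (prod_topology (top_of_set {0..1::real}) X)) X H \<and>
     (\<forall>x \<in> topspace X. H (0, x) = x \<and> H (1, x) = a))"

text \<open>A nondegenerate n-simplex of the nerve N(P): a chain q_0 < ... < q_n.\<close>
definition nondeg_simplex :: "nat \<Rightarrow> (nat \<Rightarrow> 'p::order) \<Rightarrow> bool" where
  "nondeg_simplex n \<phi> \<longleftrightarrow> strict_mono_on {..n} \<phi>"

text \<open>The structure map ||Delta^n|| \<rightarrow> P of ||Delta^phi||_P, i.e. phi_P o ||phi||: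
  a point in the interior of the face spanned by the vertex set S goes to phi(max S).\<close>
definition simplex_to_poset :: "(nat \<Rightarrow> 'p) \<Rightarrow> (nat \<Rightarrow> real) \<Rightarrow> 'p" where
  "simplex_to_poset \<phi> x = \<phi> (Max {i. x i \<noteq> 0})"

definition filtered_self_maps :: "nat \<Rightarrow> (nat \<Rightarrow> 'p) \<Rightarrow> ((nat \<Rightarrow> real) \<Rightarrow> (nat \<Rightarrow> real)) set" where
  "filtered_self_maps n \<phi> =
     {f. continuous_map (simplex_top n) (simplex_top n) f \<and> f \<in> extensional (standard_simplex n) \<and>
         (\<forall>x \<in> standard_simplex n. simplex_to_poset \<phi> (f x) = simplex_to_poset \<phi> x)}"

end

theory Submission
  imports Defs
begin

lemma openin_dgen: "openin (dgen X) U \<longleftrightarrow> dgen_open X U"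
  unfolding dgen_def by (simp add: topology_inverse' istopology_dgen_open)

lemma open_dgen: assumes "openin X U" shows "openin (dgen X) U"
  unfolding openin_dgen dgen_open_def
proof (intro conjI allI impI)
  show "U \<subseteq> topspace X" using assms by (rule openin_subset)
  fix k \<sigma> assume "continuous_map (simplex_top k) X \<sigma>"
  from openin_continuous_map_preimage[OF this assms]
  show "openin (simplex_top k) {x \<in> standard_simplex k. \<sigma> x \<in> U}" by simp
qed

lemma topspace_dgen[simp]: "topspace (dgen X) = topspace X"
proof
  show "topspace (dgen X) \<subseteq> topspace X"
    by (metis openin_dgen dgen_open_def openin_topspace)
  show "topspace X \<subseteq> topspace (dgen X)"
    using open_dgen[OF openin_topspace[of X]] openin_subset by blast
qed

lemma cont_dgen_id: "continuous_map (dgen X) X (\<lambda>x. x)"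
  unfolding continuous_map_def
proof (intro conjI allI impI)
  fix U assume "openin X U"
  then have "{x \<in> topspace (dgen X). x \<in> U} = U" using openin_subset by fastforce
  then show "openin (dgen X) {x \<in> topspace (dgen X). x \<in> U}" using open_dgen \<open>openin X U\<close> by simp
qed auto

lemma simplex_cont_dgen:
  assumes "continuous_map (simplex_top k) X \<sigma>"
  shows "continuous_map (simplex_top k) (dgen X) \<sigma>"
  unfolding continuous_map_def
proof (intro conjI allI impI)
  show "\<sigma> \<in> topspace (simplex_top k) \<rightarrow> topspace (dgen X)"
    using assms unfolding continuous_map_def by simp
  fix U assume "openin (dgen X) U"
  then have "dgen_open X U" by (simp add: openin_dgen)
  then show "openin (simplex_top k) {x \<in> topspace (simplex_top k). \<sigma> x \<in> U}"
    using assms unfolding dgen_open_def by simp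
qed

lemma dgen_cont_final:
  assumes "\<And>k \<sigma>. continuous_map (simplex_top k) X \<sigma> \<Longrightarrow> continuous_map (simplex_top k) Y (g \<circ> \<sigma>)"
    and "g \<in> topspace X \<rightarrow> topspace Y"
  shows "continuous_map (dgen X) Y g"
  unfolding continuous_map_def
proof (intro conjI allI impI)
  show "g \<in> topspace (dgen X) \<rightarrow> topspace Y" using assms(2) by simp
  fix U assume U: "openin Y U"
  show "openin (dgen X) {x \<in> topspace (dgen X). g x \<in> U}"
    unfolding openin_dgen dgen_open_def
  proof (intro conjI allI impI)
    show "{x \<in> topspace (dgen X). g x \<in> U} \<subseteq> topspace X" by auto
    fix k \<sigma> assume s: "continuous_map (simplex_top k) X \<sigma>"
    have "{x \<in> standard_simplex k. \<sigma> x \<in> {x \<in> topspace (dgen X). g x \<in> U}}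
        = {x \<in> topspace (simplex_top k). (g \<circ> \<sigma>) x \<in> U}"
      using continuous_map_image_subset_topspace[OF s] by auto
    then show "openin (simplex_top k) {x \<in> standard_simplex k. \<sigma> x \<in> {x \<in> topspace (dgen X). g x \<in> U}}"
      using openin_continuous_map_preimage[OF assms(1)[OF s] U] by simp
  qed
qed

lemma dgen_cont_into:
  assumes "continuous_map (dgen X) Y g"
  shows "continuous_map (dgen X) (dgen Y) g"
proof (rule dgen_cont_final)
  fix k \<sigma> assume "continuous_map (simplex_top k) X \<sigma>"
  then have "continuous_map (simplex_top k) (dgen X) \<sigma>" by (rule simplex_cont_dgen)
  then have "continuous_map (simplex_top k) Y (g \<circ> \<sigma>)" using assms continuous_map_compose by blast
  then show "continuous_map (simplex_top k) (dgen Y) (g \<circ> \<sigma>)" by (rule simplex_cont_dgen)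
next
  show "g \<in> topspace X \<rightarrow> topspace (dgen Y)"
    using assms unfolding continuous_map_def by simp
qed

lemma continuous_map_generated:
  assumes "f \<in> topspace X \<rightarrow> \<Union>S"
    and "\<And>T. T \<in> S \<Longrightarrow> openin X {x\<in>topspace X. f x \<in> T}"
  shows "continuous_map X (topology_generated_by S) f"
  unfolding continuous_map_def
proof (intro conjI allI impI)
  show "f \<in> topspace X \<rightarrow> topspace (topology_generated_by S)" using assms(1) by simp
  fix U assume "openin (topology_generated_by S) U"
  then have "generate_topology_on S U" by (rule openin_topology_generated_by)
  then show "openin X {x \<in> topspace X. f x \<in> U}"
  proof induction
    case Empty then show ?case by simp
  next
    case (Int a b)
    have "{x \<in> topspace X. f x \<in> a \<inter> b} = {x \<in> topspace X. f x \<in> a} \<inter> {x \<in> topspace X. f x \<in> b}" by blast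
    then show ?case using Int by auto
  next
    case (UN K)
    have "{x \<in> topspace X. f x \<in> \<Union>K} = (\<Union>k\<in>K. {x \<in> topspace X. f x \<in> k})" by blast
    then show ?case using UN by auto
  next
    case (Basis s) then show ?case using assms(2) by blast
  qed
qed

lemma topspace_compact_open:
  "topspace (compact_open A B) = {f. continuous_map A B f \<and> f \<in> extensional (topspace A)}"
  unfolding compact_open_def topology_generated_by_topspace
proof
  show "{f. continuous_map A B f \<and> f \<in> extensional (topspace A)} \<subseteq> \<Union> {F. \<exists>K U. compactin A K \<and> openin B U \<and>
        F = {f. continuous_map A B f \<and> f \<in> extensional (topspace A) \<and> f ` K \<subseteq> U}}"
  proof
    fix f assume "f \<in> {f. continuous_map A B f \<and> f \<in> extensional (topspace A)}"
    then show "f \<in> \<Union> {F. \<exists>K U. compactin A K \<and> openin B U \<and>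
        F = {f. continuous_map A B f \<and> f \<in> extensional (topspace A) \<and> f ` K \<subseteq> U}}"
      by (intro UnionI[of "{f. continuous_map A B f \<and> f \<in> extensional (topspace A) \<and> f ` {} \<subseteq> topspace B}"])
         (auto intro!: exI[of _ "{}"] exI[of _ "topspace B"])
  qed
qed auto

lemma uncurry_cont:
  assumes nb: "neighbourhood_base_of (compactin A) A"
    and rho: "continuous_map Z (compact_open A B) \<rho>"
  shows "continuous_map (prod_topology Z A) B (\<lambda>p. \<rho> (fst p) (snd p))"
  unfolding continuous_map_def
proof (intro conjI allI impI)
  have r: "\<And>s. s \<in> topspace Z \<Longrightarrow> continuous_map A B (\<rho> s)"
    using continuous_map_image_subset_topspace[OF rho] by (auto simp: topspace_compact_open)
  show "(\<lambda>p. \<rho> (fst p) (snd p)) \<in> topspace (prod_topology Z A) \<rightarrow> topspace B"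
    using r continuous_map_image_subset_topspace by fastforce
  fix W assume W: "openin B W"
  show "openin (prod_topology Z A) {x \<in> topspace (prod_topology Z A). \<rho> (fst x) (snd x) \<in> W}"
  proof (subst openin_subopen, intro ballI)
    fix p assume p: "p \<in> {x \<in> topspace (prod_topology Z A). \<rho> (fst x) (snd x) \<in> W}"
    obtain s0 x0 where p0: "p = (s0,x0)" by force
    have s0: "s0 \<in> topspace Z" and x0: "x0 \<in> topspace A" and w0: "\<rho> s0 x0 \<in> W" using p p0 by auto
    have "openin A {x \<in> topspace A. \<rho> s0 x \<in> W}"
      using openin_continuous_map_preimage[OF r[OF s0] W] .
    moreover have "x0 \<in> {x \<in> topspace A. \<rho> s0 x \<in> W}" using x0 w0 by simp
    moreover have "neighbourhood_base_at x0 (compactin A) A"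
      using nb x0 unfolding neighbourhood_base_of_def by blast
    ultimately have "\<exists>U K. openin A U \<and> compactin A K \<and> x0 \<in> U \<and> U \<subseteq> K \<and> K \<subseteq> {x \<in> topspace A. \<rho> s0 x \<in> W}"
      unfolding neighbourhood_base_at_def by blast
    then obtain U K where UK: "openin A U" "compactin A K" "x0 \<in> U" "U \<subseteq> K"
       "K \<subseteq> {x \<in> topspace A. \<rho> s0 x \<in> W}" by blast
    define N where "N = {f. continuous_map A B f \<and> f \<in> extensional (topspace A) \<and> f ` K \<subseteq> W}"
    have "openin (compact_open A B) N"
      unfolding N_def compact_open_def
      by (rule topology_generated_by_Basis) (use UK W in blast)
    then have M: "openin Z {s \<in> topspace Z. \<rho> s \<in> N}"
      using openin_continuous_map_preimage[OF rho] by blast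
    have rN: "\<And>s. s \<in> topspace Z \<Longrightarrow> \<rho> s \<in> topspace (compact_open A B)"
      using continuous_map_image_subset_topspace[OF rho] by auto
    show "\<exists>T. openin (prod_topology Z A) T \<and> p \<in> T \<and> T \<subseteq> {x \<in> topspace (prod_topology Z A). \<rho> (fst x) (snd x) \<in> W}"
    proof (intro exI conjI)
      show "openin (prod_topology Z A) ({s \<in> topspace Z. \<rho> s \<in> N} \<times> U)"
        using M UK(1) by (simp add: openin_prod_Times_iff)
      show "p \<in> {s \<in> topspace Z. \<rho> s \<in> N} \<times> U"
        using p0 s0 UK rN[OF s0] by (auto simp: N_def topspace_compact_open)
      show "{s \<in> topspace Z. \<rho> s \<in> N} \<times> U \<subseteq> {x \<in> topspace (prod_topology Z A). \<rho> (fst x) (snd x) \<in> W}"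
        using UK openin_subset[OF UK(1)] unfolding N_def by (auto simp: image_subset_iff)
    qed
  qed
qed

lemma curry_cont:
  assumes G: "continuous_map (prod_topology Z A) B G"
  shows "continuous_map Z (compact_open A B) (\<lambda>s. restrict (\<lambda>x. G (s,x)) (topspace A))"
  unfolding compact_open_def
proof (rule continuous_map_generated)
  have c: "continuous_map A B (restrict (\<lambda>x. G (s,x)) (topspace A))" if s: "s \<in> topspace Z" for s
  proof -
    have "continuous_map A (prod_topology Z A) (\<lambda>x. (s,x))"
      using s by (intro continuous_map_pairedI) auto
    then have "continuous_map A B (\<lambda>x. G (s,x))"
      using continuous_map_compose[OF _ G] by (simp add: o_def)
    then show ?thesis by (rule continuous_map_eq) auto
  qed
  show "(\<lambda>s. restrict (\<lambda>x. G (s,x)) (topspace A)) \<in> topspace Z \<rightarrow> \<Union> {F. \<exists>K U. compactin A K \<and> openin B U \<and>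
        F = {f. continuous_map A B f \<and> f \<in> extensional (topspace A) \<and> f ` K \<subseteq> U}}"
    using c topspace_compact_open[of A B] unfolding compact_open_def topology_generated_by_topspace
    by auto
  fix T assume "T \<in> {F. \<exists>K U. compactin A K \<and> openin B U \<and>
        F = {f. continuous_map A B f \<and> f \<in> extensional (topspace A) \<and> f ` K \<subseteq> U}}"
  then obtain K U where KU: "compactin A K" "openin B U"
    and T: "T = {f. continuous_map A B f \<and> f \<in> extensional (topspace A) \<and> f ` K \<subseteq> U}" by blast
  have Ksub: "K \<subseteq> topspace A" using KU(1) compactin_subset_topspace by blast
  have eq: "{s \<in> topspace Z. restrict (\<lambda>x. G (s,x)) (topspace A) \<in> T}
      = {s \<in> topspace Z. \<forall>x\<in>K. G (s,x) \<in> U}"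
    using c Ksub unfolding T by auto
  have W: "openin (prod_topology Z A) {p \<in> topspace (prod_topology Z A). G p \<in> U}"
    using openin_continuous_map_preimage[OF G KU(2)] .
  show "openin Z {s \<in> topspace Z. restrict (\<lambda>x. G (s,x)) (topspace A) \<in> T}"
    unfolding eq
  proof (subst openin_subopen, intro ballI)
    fix s0 assume s0: "s0 \<in> {s \<in> topspace Z. \<forall>x\<in>K. G (s,x) \<in> U}"
    have "{s0} \<times> K \<subseteq> {p \<in> topspace (prod_topology Z A). G p \<in> U}"
      using s0 Ksub by auto
    from tube_lemma_right[OF W KU(1) _ this] s0
    obtain U' V' where UV: "openin Z U'" "openin A V'" "s0 \<in> U'" "K \<subseteq> V'"
      "U' \<times> V' \<subseteq> {p \<in> topspace (prod_topology Z A). G p \<in> U}" by blast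
    show "\<exists>T. openin Z T \<and> s0 \<in> T \<and> T \<subseteq> {s \<in> topspace Z. \<forall>x\<in>K. G (s,x) \<in> U}"
    proof (intro exI conjI)
      show "U' \<subseteq> {s \<in> topspace Z. \<forall>x\<in>K. G (s,x) \<in> U}"
        using UV openin_subset[OF UV(1)] by blast
    qed (use UV in auto)
  qed
qed


lemma closedin_ss: "closedin (powertop_real UNIV) (standard_simplex p)"
    (is "closedin ?X ?S")
proof -
  have eq: "standard_simplex p =
              (\<Inter>i. {x. x \<in> topspace ?X \<and> x i \<in> {0..1}}) \<inter>
              (\<Inter>i \<in> {p<..}. {x \<in> topspace ?X. x i \<in> {0}}) \<inter>
              {x \<in> topspace ?X. (\<Sum>i\<le>p. x i) \<in> {1}}"
    by (auto simp: standard_simplex_def topspace_product_topology)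
  show ?thesis
    unfolding eq
    by (rule closedin_Int closedin_Inter continuous_map_sum
             continuous_map_product_projection closedin_continuous_map_preimage | force | clarify)+
qed

lemma compactin_ss: "compactin (powertop_real UNIV) (standard_simplex p)"
proof (rule closed_compactin)
  show "compactin (powertop_real UNIV) (UNIV \<rightarrow>\<^sub>E {0..1})"
    by (simp add: compactin_PiE)
  show "standard_simplex p \<subseteq> UNIV \<rightarrow>\<^sub>E {0..1}"
    by (auto simp: standard_simplex_def)
  show "closedin (powertop_real UNIV) (standard_simplex p)"
    by (simp add: closedin_ss)
qed

lemma convex_ss:
   "\<lbrakk>x \<in> standard_simplex p; y \<in> standard_simplex p; 0 \<le> u; u \<le> 1\<rbrakk>
    \<Longrightarrow> (\<lambda>i. (1 - u) * x i + u * y i) \<in> standard_simplex p"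
  by (simp add: standard_simplex_def sum.distrib convex_bound_le flip: sum_distrib_left)

lemma nb_simplex: "neighbourhood_base_of (compactin (simplex_top n)) (simplex_top n)"
proof -
  have "compact_space (simplex_top n)" using compactin_ss compact_space_subtopology by blast
  then have "locally_compact_space (simplex_top n)" by (rule compact_imp_locally_compact_space)
  moreover have "Hausdorff_space (simplex_top n)"
    by (rule Hausdorff_space_subtopology) (metis Hausdorff_space_euclidean Hausdorff_space_product_topology)
  ultimately show ?thesis using locally_compact_space_neighbourhood_base by blast
qed

lemma supp_facts:
  assumes "x \<in> standard_simplex n"
  shows "finite {i. x i \<noteq> 0}" "{i. x i \<noteq> 0} \<noteq> {}" "{i. x i \<noteq> 0} \<subseteq> {..n}"
proof -
  show s: "{i. x i \<noteq> 0} \<subseteq> {..n}" using assms unfolding standard_simplex_def by (auto, meson not_le)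
  then show "finite {i. x i \<noteq> 0}" using finite_subset by blast
  show "{i. x i \<noteq> 0} \<noteq> {}"
  proof
    assume "{i. x i \<noteq> 0} = {}"
    then have "(\<Sum>i\<le>n. x i) = 0" by auto
    then show False using assms by (simp add: standard_simplex_def)
  qed
qed

lemma filt_conv:
  fixes \<phi> :: "nat \<Rightarrow> 'p::order"
  assumes phi: "strict_mono_on {..n} \<phi>"
    and x: "x \<in> standard_simplex n" and y: "y \<in> standard_simplex n"
    and eq: "simplex_to_poset \<phi> y = simplex_to_poset \<phi> x"
    and t: "0 \<le> t" "t \<le> 1"
  shows "simplex_to_poset \<phi> (\<lambda>i. (1 - t) * y i + t * x i) = simplex_to_poset \<phi> x"
proof -
  define m where "m = Max {i. x i \<noteq> 0}"
  have mx: "m \<in> {i. x i \<noteq> 0}" "\<And>i. x i \<noteq> 0 \<Longrightarrow> i \<le> m"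
    unfolding m_def using Max_in[OF supp_facts(1,2)[OF x]] Max_ge[OF supp_facts(1)[OF x]] by auto
  have my0: "Max {i. y i \<noteq> 0} \<in> {i. y i \<noteq> 0}" using Max_in[OF supp_facts(1,2)[OF y]] .
  have "Max {i. y i \<noteq> 0} = m"
  proof -
    have "inj_on \<phi> {..n}" using phi by (rule strict_mono_on_imp_inj_on)
    moreover have "Max {i. y i \<noteq> 0} \<in> {..n}" "m \<in> {..n}"
      using supp_facts[OF x] supp_facts[OF y] mx(1) my0 by auto
    moreover have "\<phi> (Max {i. y i \<noteq> 0}) = \<phi> m" using eq unfolding simplex_to_poset_def m_def .
    ultimately show ?thesis by (meson inj_onD)
  qed
  then have my: "m \<in> {i. y i \<noteq> 0}" "\<And>i. y i \<noteq> 0 \<Longrightarrow> i \<le> m"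
    using Max_ge[OF supp_facts(1)[OF y]] my0 by auto
  have nx: "\<And>i. 0 \<le> x i" and ny: "\<And>i. 0 \<le> y i" using x y by (auto simp: standard_simplex_def)
  have "Max {i. (1 - t) * y i + t * x i \<noteq> 0} = m"
  proof (rule Max_eqI)
    show "finite {i. (1 - t) * y i + t * x i \<noteq> 0}"
      by (rule finite_subset[of _ "{i. x i \<noteq> 0} \<union> {i. y i \<noteq> 0}"])
         (use supp_facts[OF x] supp_facts[OF y] in auto)
    show "i \<le> m" if "i \<in> {i. (1 - t) * y i + t * x i \<noteq> 0}" for i
      using that mx my by (cases "x i = 0"; cases "y i = 0") auto
    have "(1 - t) * y m + t * x m \<noteq> 0"
    proof
      assume h: "(1 - t) * y m + t * x m = 0"
      have a: "0 \<le> (1 - t) * y m" "0 \<le> t * x m" using t nx ny by auto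
      then have "(1 - t) * y m = 0" "t * x m = 0" using h by linarith+
      then show False using mx my by auto
    qed
    then show "m \<in> {i. (1 - t) * y i + t * x i \<noteq> 0}" by simp
  qed
  then show ?thesis unfolding simplex_to_poset_def m_def by simp
qed


theorem lemma2p18:
  fixes \<phi> :: "nat \<Rightarrow> 'p::order" and n :: nat
  assumes "nondeg_simplex n \<phi>"
  shows "dcontractible
           (dsubtopology (mapping_space (simplex_top n) (simplex_top n)) (filtered_self_maps n \<phi>))"
proof -
  have phi: "strict_mono_on {..n} \<phi>" using assms by (simp add: nondeg_simplex_def)
  define S where "S = standard_simplex n"
  define A where "A = simplex_top n"
  define CO where "CO = compact_open A A"
  define F where "F = filtered_self_maps n \<phi>"
  define X where "X = dgen (subtopology (dgen CO) F)"
  have tA: "topspace A = S" by (simp add: A_def S_def)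
  have Fdef: "\<And>f. f \<in> F \<longleftrightarrow> continuous_map A A f \<and> f \<in> extensional S \<and>
         (\<forall>x \<in> S. simplex_to_poset \<phi> (f x) = simplex_to_poset \<phi> x)"
    by (simp add: F_def filtered_self_maps_def A_def S_def)
  have tCO: "topspace CO = {f. continuous_map A A f \<and> f \<in> extensional S}"
    by (simp add: CO_def topspace_compact_open tA)
  have FCO: "F \<subseteq> topspace CO" using Fdef tCO by auto
  have tX: "topspace X = F" using FCO by (auto simp: X_def)
  define H where "H = (\<lambda>(t::real, f::(nat\<Rightarrow>real)\<Rightarrow>(nat\<Rightarrow>real)).
      restrict (\<lambda>x i. (1 - t) * f x i + t * x i) S)"
  define a where "a = restrict (\<lambda>x. x) S"
  have inS: "\<And>x. x \<in> S \<Longrightarrow> f \<in> F \<Longrightarrow> f x \<in> S" for f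
    using Fdef continuous_map_image_subset_topspace tA by blast
  have Gcont: "continuous_map (prod_topology Z A) A
      (\<lambda>p. (\<lambda>i. (1 - \<tau> (fst p)) * \<rho> (fst p) (snd p) i + \<tau> (fst p) * snd p i))"
    if tau: "continuous_map Z (top_of_set {0..1::real}) \<tau>" and rho: "continuous_map Z CO \<rho>"
      and rF: "\<And>s. s \<in> topspace Z \<Longrightarrow> \<rho> s \<in> F" for Z :: "'z topology" and \<tau> \<rho>
  proof -
    have U: "continuous_map (prod_topology Z A) A (\<lambda>p. \<rho> (fst p) (snd p))"
      using uncurry_cont[OF nb_simplex rho[unfolded CO_def A_def]] by (simp add: A_def)
    then have U': "continuous_map (prod_topology Z A) (powertop_real UNIV) (\<lambda>p. \<rho> (fst p) (snd p))"
      unfolding A_def using continuous_map_in_subtopology by blast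
    have T: "continuous_map (prod_topology Z A) euclideanreal (\<lambda>p. \<tau> (fst p))"
    proof -
      have "continuous_map (prod_topology Z A) (top_of_set {0..1::real}) (\<tau> \<circ> fst)"
        using continuous_map_compose[OF continuous_map_fst tau] .
      then have "continuous_map (prod_topology Z A) euclideanreal (\<tau> \<circ> fst)"
        using continuous_map_in_subtopology by blast
      then show ?thesis by (simp add: o_def)
    qed
    have Sn: "continuous_map (prod_topology Z A) (powertop_real UNIV) snd"
      using continuous_map_snd[of Z A] unfolding A_def using continuous_map_in_subtopology by blast
    have P: "continuous_map (prod_topology Z A) (powertop_real UNIV)
      (\<lambda>p. (\<lambda>i. (1 - \<tau> (fst p)) * \<rho> (fst p) (snd p) i + \<tau> (fst p) * snd p i))"
      unfolding continuous_map_componentwise_UNIV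
    proof
      fix i
      have r: "continuous_map (prod_topology Z A) euclideanreal (\<lambda>p. \<rho> (fst p) (snd p) i)"
        using continuous_map_compose[OF U' continuous_map_product_projection[of i UNIV]]
        by (simp add: o_def)
      have s: "continuous_map (prod_topology Z A) euclideanreal (\<lambda>p. snd p i)"
        using continuous_map_compose[OF Sn continuous_map_product_projection[of i UNIV]]
        by (simp add: o_def)
      show "continuous_map (prod_topology Z A) euclideanreal
          (\<lambda>p. (1 - \<tau> (fst p)) * \<rho> (fst p) (snd p) i + \<tau> (fst p) * snd p i)"
        by (intro continuous_map_add continuous_map_real_mult continuous_map_diff
            continuous_map_const[THEN iffD2] r s T) auto
    qed
    have P2: "(\<lambda>p i. (1 - \<tau> (fst p)) * \<rho> (fst p) (snd p) i + \<tau> (fst p) * snd p i) `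
          topspace (prod_topology Z A) \<subseteq> standard_simplex n"
    proof (rule image_subsetI)
      fix p assume sx: "p \<in> topspace (prod_topology Z A)"
      then have s: "fst p \<in> topspace Z" and x: "snd p \<in> S" by (auto simp: S_def A_def)
      have "\<tau> (fst p) \<in> {0..1}" using continuous_map_image_subset_topspace[OF tau] s by auto
      then show "(\<lambda>i. (1 - \<tau> (fst p)) * \<rho> (fst p) (snd p) i + \<tau> (fst p) * snd p i)
              \<in> standard_simplex n"
        using convex_ss[of "\<rho> (fst p) (snd p)" n "snd p" "\<tau> (fst p)"] inS[OF x rF[OF s]] x by (simp add: S_def)
    qed
    have "continuous_map (prod_topology Z A) (subtopology (powertop_real UNIV) (standard_simplex n))
      (\<lambda>p i. (1 - \<tau> (fst p)) * \<rho> (fst p) (snd p) i + \<tau> (fst p) * snd p i)"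
      using P P2 by (simp add: continuous_map_in_subtopology image_subset_iff_funcset)
    then show ?thesis by (simp add: A_def)
  qed
  have HF: "H (t, f) \<in> F" if t: "t \<in> {0..1}" and f: "f \<in> F" for t f
  proof -
    have Gc: "continuous_map (prod_topology (top_of_set {0..1::real}) A) A
      (\<lambda>p. (\<lambda>i. (1 - (\<lambda>_. t) (fst p)) * (\<lambda>_. f) (fst p) (snd p) i + (\<lambda>_. t) (fst p) * snd p i))"
    proof (rule Gcont)
      show "continuous_map (top_of_set {0..1::real}) (top_of_set {0..1::real}) (\<lambda>_. t)" using t by simp
      show "continuous_map (top_of_set {0..1::real}) CO (\<lambda>_. f)" unfolding continuous_map_const using f FCO by blast
    next
      show "\<And>s. s \<in> topspace (top_of_set {0..1::real}) \<Longrightarrow> (\<lambda>_. f) s \<in> F" using f by simp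
    qed
    have p: "continuous_map A (prod_topology (top_of_set {0..1::real}) A) (\<lambda>x. (t,x))"
      using t by (intro continuous_map_pairedI) auto
    have "continuous_map A A (\<lambda>x i. (1 - t) * f x i + t * x i)"
      using continuous_map_compose[OF p Gc] by (simp add: o_def)
    then have c: "continuous_map A A (H (t, f))"
      by (rule continuous_map_eq) (simp add: H_def tA)
    show ?thesis unfolding Fdef
    proof (intro conjI ballI c)
      show "H (t, f) \<in> extensional S" by (simp add: H_def)
      fix x assume x: "x \<in> S"
      have "simplex_to_poset \<phi> (f x) = simplex_to_poset \<phi> x" using f x Fdef by blast
      then show "simplex_to_poset \<phi> (H (t, f) x) = simplex_to_poset \<phi> x"
        using filt_conv[OF phi _ _ _, of x "f x" t] x inS[OF x f] t
        by (simp add: H_def S_def)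
    qed
  qed
  have aF: "a \<in> F"
    unfolding Fdef
  proof (intro conjI ballI)
    show "continuous_map A A a" unfolding a_def
      by (rule continuous_map_eq[OF continuous_map_id]) (auto simp: tA)
  qed (auto simp: a_def)
  have H0: "H (0, f) = f" if "f \<in> F" for f
  proof
    fix x show "H (0, f) x = f x"
    proof (cases "x \<in> S")
      case True then show ?thesis by (simp add: H_def)
    next
      case False
      have "f \<in> extensional S" using that Fdef by blast
      then have "f x = undefined" using False by (rule extensional_arb)
      then show ?thesis using False by (simp add: H_def)
    qed
  qed
  have H1: "H (1, f) = a" for f
    by (auto simp: H_def a_def)
  have cont: "continuous_map (dgen (prod_topology (top_of_set {0..1::real}) X)) X H"
  proof -
    have img: "H \<in> topspace (prod_topology (top_of_set {0..1::real}) X) \<rightarrow> F"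
      using HF by (auto simp: tX)
    have "continuous_map (dgen (prod_topology (top_of_set {0..1::real}) X)) CO H"
    proof (rule dgen_cont_final)
      show "H \<in> topspace (prod_topology (top_of_set {0..1::real}) X) \<rightarrow> topspace CO"
        using img FCO by auto
      fix k \<sigma> assume s: "continuous_map (simplex_top k) (prod_topology (top_of_set {0..1::real}) X) \<sigma>"
      define \<tau> where "\<tau> = fst \<circ> \<sigma>"
      define \<rho> where "\<rho> = snd \<circ> \<sigma>"
      have tau: "continuous_map (simplex_top k) (top_of_set {0..1::real}) \<tau>"
        using s by (simp add: \<tau>_def continuous_map_pairwise)
      have rhoX: "continuous_map (simplex_top k) X \<rho>"
        using s by (simp add: \<rho>_def continuous_map_pairwise)
      have "continuous_map (simplex_top k) (subtopology (dgen CO) F) \<rho>"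
        using continuous_map_compose[OF rhoX[unfolded X_def] cont_dgen_id[of "subtopology (dgen CO) F"]]
        by (simp add: X_def o_def)
      then have "continuous_map (simplex_top k) (dgen CO) \<rho>"
        using continuous_map_in_subtopology by blast
      then have rho: "continuous_map (simplex_top k) CO \<rho>"
        using continuous_map_compose[OF _ cont_dgen_id[of CO]] by (simp add: o_def)
      have rF: "\<And>s. s \<in> topspace (simplex_top k) \<Longrightarrow> \<rho> s \<in> F"
        using continuous_map_image_subset_topspace[OF rhoX] tX by auto
      have G: "continuous_map (prod_topology (simplex_top k) A) A
        (\<lambda>p. (\<lambda>i. (1 - \<tau> (fst p)) * \<rho> (fst p) (snd p) i + \<tau> (fst p) * snd p i))"
        by (rule Gcont[OF tau rho rF])
      have eq: "H \<circ> \<sigma> = (\<lambda>s. restrict (\<lambda>x. (\<lambda>p. (\<lambda>i. (1 - \<tau> (fst p)) * \<rho> (fst p) (snd p) i + \<tau> (fst p) * snd p i)) (s,x)) (topspace A))"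
        by (rule ext) (simp add: H_def \<tau>_def \<rho>_def tA split_beta)
      show "continuous_map (simplex_top k) CO (H \<circ> \<sigma>)"
        unfolding eq CO_def by (rule curry_cont[OF G])
    qed
    then have "continuous_map (dgen (prod_topology (top_of_set {0..1::real}) X)) (dgen CO) H"
      by (rule dgen_cont_into)
    then have "continuous_map (dgen (prod_topology (top_of_set {0..1::real}) X)) (subtopology (dgen CO) F) H"
      using img by (auto simp: continuous_map_in_subtopology)
    then show ?thesis unfolding X_def by (rule dgen_cont_into)
  qed
  have aX: "a \<in> topspace X" using aF tX by simp
  have HH: "\<forall>x\<in>topspace X. H (0, x) = x \<and> H (1, x) = a" using H0 H1 tX by simp
  have "dcontractible X"
    unfolding dcontractible_def using cont aX HH by blast
  then show ?thesis
    by (simp add: X_def CO_def A_def F_def dsubtopology_def mapping_space_def)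
qed

end
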